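(* Let $B\ge 2$ and $\eta\in\mathbb{N}$. Then $t_{\eta+1}\;\ge\;\left\lfloor\dfrac{\gamma_B(\eta)}{(B-1)^2}\right\rfloor-(2B-4)$.
   Context: Fix an integer base $B \geq 2$. Every integer $x>0$ is written uniquely as $x=\sum_{i=0}^{L(x)-1} x_i B^i$ with digits $0 \le x_i \le B-1$ and $x_{L(x)-1}\neq 0$. Define $\mathcal{H}_B(x)=\sum_{i=0}^{L(x)-1} x_i^2$, $\mathcal{H}_B(0)=0$, $\mathcal{H}_B^0(x)=x$, $\mathcal{H}_B^{n}=\mathcal{H}_B\circ\mathcal{H}_B^{n-1}$. A positive integer $x$ is happy if $\mathcal{H}_B^n(x)=1$ for some $n\in\mathbb{N}$; its height is $\eta_B(x)=\min\{\alpha\in\mathbb{N}:\mathcal{H}_B^\alpha(x)=1\}$. For $n\in\mathbb{N}$, $\gamma_B(n)$ denotes the smallest happy number $x\ge 1$ with $\eta_B(x)=n$. For each $n$, $L_n=L(\gamma_B(n))$ is the number of base-$B$ digits of $\gamma_B(n)$, $t_n$ is the number of those digits equal to $B-1$, and $\alpha_n=L_n-t_n$ is the number of digits smaller than $B-1$. $\lfloor\cdot\rfloor$ is the integer part. *)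

theory Defs
  imports Complex_Main
begin

definition digit :: "nat \<Rightarrow> nat \<Rightarrow> nat \<Rightarrow> nat" where
  "digit B x i = x div B ^ i mod B"

text \<open>Number of base-B digits L(x) of x > 0: the least n with x < B^n
  (so that the digit at position L(x)-1 is nonzero). L(0) = 0.\<close>
definition numdigits :: "nat \<Rightarrow> nat \<Rightarrow> nat" where
  "numdigits B x = (LEAST n. x < B ^ n)"

definition H :: "nat \<Rightarrow> nat \<Rightarrow> nat" where
  "H B x = (\<Sum>i<numdigits B x. (digit B x i)^2)"

definition happy :: "nat \<Rightarrow> nat \<Rightarrow> bool" where
  "happy B x \<longleftrightarrow> x > 0 \<and> (\<exists>n. (H B ^^ n) x = 1)"

definition height :: "nat \<Rightarrow> nat \<Rightarrow> nat" where
  "height B x = (LEAST a. (H B ^^ a) x = 1)"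

definition gamma :: "nat \<Rightarrow> nat \<Rightarrow> nat" where
  "gamma B n = (LEAST x. x \<ge> 1 \<and> happy B x \<and> height B x = n)"

definition tcount :: "nat \<Rightarrow> nat \<Rightarrow> nat" where
  "tcount B n = card {i. i < numdigits B (gamma B n) \<and> digit B (gamma B n) i = B - 1}"

end

theory Submission
  imports Defs
begin


fun val :: "nat \<Rightarrow> nat list \<Rightarrow> nat" where
  "val B [] = 0"
| "val B (d # ds) = d + B * val B ds"

lemma val_lt: "(\<forall>d\<in>set ds. d < B) \<Longrightarrow> val B ds < B ^ length ds"
proof (induction ds)
  case Nil then show ?case by simp
next
  case (Cons d ds)
  then have "d < B" "val B ds + 1 \<le> B ^ length ds" by auto
  then have "d + B * val B ds < B + B * val B ds" by simp
  also have "\<dots> = B * (val B ds + 1)" by (simp add: algebra_simps)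
  also have "\<dots> \<le> B * B ^ length ds" using \<open>val B ds + 1 \<le> _\<close> by (rule mult_left_mono) simp
  finally show ?case by simp
qed

lemma val_ge: "B \<ge> 1 \<Longrightarrow> ds \<noteq> [] \<Longrightarrow> last ds \<noteq> 0 \<Longrightarrow> B ^ (length ds - 1) \<le> val B ds"
proof (induction ds)
  case Nil then show ?case by simp
next
  case (Cons d ds)
  show ?case
  proof (cases "ds = []")
    case True then show ?thesis using Cons by simp
  next
    case False
    then have "B ^ (length ds - 1) \<le> val B ds" using Cons by simp
    then have "B * B ^ (length ds - 1) \<le> B * val B ds" by (rule mult_left_mono) simp
    moreover have "B * B ^ (length ds - 1) = B ^ (length (d#ds) - 1)"
      using False by (cases ds) auto
    ultimately have "B ^ (length (d#ds) - 1) \<le> B * val B ds" by linarith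
    then show ?thesis by simp
  qed
qed

lemma digit_val: "B > 0 \<Longrightarrow> (\<forall>d\<in>set ds. d < B) \<Longrightarrow> i < length ds \<Longrightarrow> digit B (val B ds) i = ds ! i"
proof (induction ds arbitrary: i)
  case Nil then show ?case by simp
next
  case (Cons d ds)
  show ?case
  proof (cases i)
    case 0 then show ?thesis using Cons by (simp add: digit_def)
  next
    case (Suc j)
    have "(d + B * val B ds) div B ^ Suc j = ((d + B * val B ds) div B) div B ^ j"
      by (simp add: div_mult2_eq)
    also have "(d + B * val B ds) div B = val B ds" using Cons by simp
    finally have "digit B (val B (d#ds)) i = digit B (val B ds) j"
      using Suc by (simp add: digit_def)
    then show ?thesis using Cons Suc by simp
  qed
qed

lemma numdigits_le: "x < B ^ n \<Longrightarrow> numdigits B x \<le> n"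
  unfolding numdigits_def by (rule Least_le)

lemma numdigits_val: "B \<ge> 2 \<Longrightarrow> (\<forall>d\<in>set ds. d < B) \<Longrightarrow> ds \<noteq> [] \<Longrightarrow> last ds \<noteq> 0
   \<Longrightarrow> numdigits B (val B ds) = length ds"
  unfolding numdigits_def
proof (rule Least_equality)
  assume a: "B \<ge> 2" "\<forall>d\<in>set ds. d < B" "ds \<noteq> []" "last ds \<noteq> 0"
  show "val B ds < B ^ length ds" using val_lt a by blast
  fix n assume n: "val B ds < B ^ n"
  show "length ds \<le> n"
  proof (rule ccontr)
    assume "\<not> length ds \<le> n"
    then have "n \<le> length ds - 1" by simp
    then have "B ^ n \<le> B ^ (length ds - 1)" using a by (simp add: power_increasing)
    also have "\<dots> \<le> val B ds" using val_ge a by simp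
    finally show False using n by simp
  qed
qed

lemma H_val: "B \<ge> 2 \<Longrightarrow> (\<forall>d\<in>set ds. d < B) \<Longrightarrow> ds \<noteq> [] \<Longrightarrow> last ds \<noteq> 0
   \<Longrightarrow> H B (val B ds) = sum_list (map (\<lambda>d. d^2) ds)"
proof -
  assume a: "B \<ge> 2" "\<forall>d\<in>set ds. d < B" "ds \<noteq> []" "last ds \<noteq> 0"
  have "H B (val B ds) = (\<Sum>i<length ds. (ds ! i)^2)"
    unfolding H_def using numdigits_val[OF a] digit_val a by simp
  also have "\<dots> = sum_list (map (\<lambda>d. d^2) ds)"
    by (simp add: sum_list_sum_nth atLeast0LessThan)
  finally show ?thesis .
qed

lemma H_zero: "B \<ge> 2 \<Longrightarrow> H B 0 = 0"
proof -
  assume "B \<ge> 2"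
  have "numdigits B 0 = 0" unfolding numdigits_def by (rule Least_equality) auto
  then show ?thesis by (simp add: H_def)
qed

lemma Hpow_zero: "B \<ge> 2 \<Longrightarrow> (H B ^^ n) 0 = 0"
  by (induction n) (auto simp: H_zero)

lemma H_bound:
  assumes "B \<ge> 2"
  shows "H B x \<le> (B-2)^2 * numdigits B x + (2*B-3) * card {i. i < numdigits B x \<and> digit B x i = B - 1}"
proof -
  define L where "L = numdigits B x"
  have pt: "(digit B x i)^2 \<le> (B-2)^2 + (if digit B x i = B - 1 then 2*B-3 else 0)" for i
  proof (cases "digit B x i = B - 1")
    case True
    have "(B-1)^2 = (B-2)^2 + (2*B-3)" using assms
      by (cases B; cases "B - 1"; simp add: power2_eq_square algebra_simps)
    then show ?thesis using True by simp
  next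
    case False
    have "digit B x i < B" unfolding digit_def using assms by simp
    then have "digit B x i \<le> B - 2" using False by linarith
    then show ?thesis using False by (simp add: power_mono)
  qed
  have "H B x = (\<Sum>i<L. (digit B x i)^2)" by (simp add: H_def L_def)
  also have "\<dots> \<le> (\<Sum>i<L. (B-2)^2 + (if digit B x i = B - 1 then 2*B-3 else 0))"
    by (rule sum_mono) (rule pt)
  also have "\<dots> = L * (B-2)^2 + (\<Sum>i<L. (if digit B x i = B - 1 then 2*B-3 else 0))"
    by (simp add: sum.distrib)
  also have "(\<Sum>i<L. (if digit B x i = B - 1 then 2*B-3 else 0)) = (\<Sum>i\<in>{i\<in>{..<L}. digit B x i = B - 1}. 2*B-3)"
    by (rule sum.inter_filter[symmetric]) simp
  also have "{i\<in>{..<L}. digit B x i = B - 1} = {i. i < L \<and> digit B x i = B - 1}" by auto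
  also have "(\<Sum>i\<in>{i. i < L \<and> digit B x i = B - 1}. 2*B-3) = (2*B-3) * card {i. i < L \<and> digit B x i = B - 1}"
    by simp
  finally show ?thesis by (simp add: L_def mult.commute)
qed



lemma height_step:
  assumes B: "B \<ge> 2" and y: "y \<ge> 1" "happy B y" "height B y = n"
    and Hx: "H B x = y" and x1: "x \<noteq> 1"
  shows "x \<ge> 1 \<and> happy B x \<and> height B x = Suc n"
proof -
  have yn: "(H B ^^ n) y = 1"
  proof -
    obtain k where "(H B ^^ k) y = 1" using y unfolding happy_def by blast
    then have "(H B ^^ (LEAST a. (H B ^^ a) y = 1)) y = 1" by (rule LeastI)
    then show ?thesis using y unfolding height_def by simp
  qed
  have x0: "x \<ge> 1" using Hx y H_zero[OF B] by (cases x) auto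
  have xs: "(H B ^^ Suc n) x = 1" using yn Hx by (simp add: funpow_Suc_right del: funpow.simps)
  have "height B x = Suc n"
    unfolding height_def
  proof (rule Least_equality)
    show "(H B ^^ Suc n) x = 1" by (rule xs)
    fix a assume a: "(H B ^^ a) x = 1"
    show "Suc n \<le> a"
    proof (cases a)
      case 0 then show ?thesis using a x1 by simp
    next
      case (Suc a')
      then have "(H B ^^ a') y = 1" using a Hx by (simp add: funpow_Suc_right del: funpow.simps)
      then have "(LEAST a. (H B ^^ a) y = 1) \<le> a'" by (rule Least_le)
      then have "n \<le> a'" using y unfolding height_def by simp
      then show ?thesis using Suc by simp
    qed
  qed
  moreover have "happy B x" unfolding happy_def using x0 xs by (intro conjI exI[of _ "Suc n"]) auto
  ultimately show ?thesis using x0 by blast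
qed

lemma height_exists:
  assumes B: "B \<ge> 2"
  shows "\<exists>y. y \<ge> 1 \<and> happy B y \<and> height B y = n"
proof (induction n)
  case 0
  have "height B 1 = 0" unfolding height_def by (rule Least_equality) auto
  moreover have "happy B 1" unfolding happy_def by (auto intro: exI[of _ 0])
  ultimately show ?case by auto
next
  case (Suc n)
  then obtain y where y: "y \<ge> 1" "happy B y" "height B y = n" by blast
  define ds where "ds = 0 # replicate y (1::nat)"
  have dsp: "\<forall>d\<in>set ds. d < B" "ds \<noteq> []" "last ds \<noteq> 0" using B y by (auto simp: ds_def)
  have "H B (val B ds) = y" using H_val[OF B dsp] by (simp add: ds_def sum_list_replicate)
  moreover have "val B ds \<noteq> 1"
  proof -
    obtain y' where "y = Suc y'" using y by (cases y) auto
    then have "val B ds = B * (1 + B * val B (replicate y' 1))" by (simp add: ds_def)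
    then have "val B ds \<ge> B" by simp
    then show ?thesis using B by simp
  qed
  ultimately show ?case using height_step[OF B y] by blast
qed

lemma gamma_prop:
  assumes B: "B \<ge> 2"
  shows "gamma B n \<ge> 1 \<and> happy B (gamma B n) \<and> height B (gamma B n) = n"
  unfolding gamma_def using height_exists[OF B, of n] by (rule LeastI_ex) 

lemma gamma_min:
  "x \<ge> 1 \<Longrightarrow> happy B x \<Longrightarrow> height B x = n \<Longrightarrow> gamma B n \<le> x"
  unfolding gamma_def by (rule Least_le) simp

lemma gamma_H:
  assumes B: "B \<ge> 2"
  shows "gamma B n \<le> H B (gamma B (Suc n))"
proof -
  let ?x = "gamma B (Suc n)"
  have p: "?x \<ge> 1" "happy B ?x" "height B ?x = Suc n" using gamma_prop[OF B] by auto
  have xs: "(H B ^^ Suc n) ?x = 1"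
  proof -
    obtain k where "(H B ^^ k) ?x = 1" using p unfolding happy_def by blast
    then have "(H B ^^ (LEAST a. (H B ^^ a) ?x = 1)) ?x = 1" by (rule LeastI)
    then show ?thesis using p unfolding height_def by simp
  qed
  then have yn: "(H B ^^ n) (H B ?x) = 1" by (simp add: funpow_Suc_right del: funpow.simps)
  have y1: "H B ?x \<ge> 1"
    using yn Hpow_zero[OF B, of n] by (cases "H B ?x") auto
  have "height B (H B ?x) = n"
    unfolding height_def
  proof (rule Least_equality)
    show "(H B ^^ n) (H B ?x) = 1" by (rule yn)
    fix a assume "(H B ^^ a) (H B ?x) = 1"
    then have "(H B ^^ Suc a) ?x = 1" by (simp only: funpow_Suc_right comp_def)
    then have "(LEAST a. (H B ^^ a) ?x = 1) \<le> Suc a" by (rule Least_le)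
    then have "Suc n \<le> Suc a" using p unfolding height_def by simp
    then show "n \<le> a" by simp
  qed
  moreover have "happy B (H B ?x)" using y1 yn unfolding happy_def by (intro conjI exI) auto
  ultimately show ?thesis using y1 by (intro gamma_min) auto
qed



lemma key_ineq:
  fixes B p s :: int
  assumes B: "B \<ge> 3" and p: "p \<ge> 1" and s1: "p*(p-1) \<le> s" and s2: "s + 2 \<le> p*(p+1)"
    and s3: "s \<le> 4*B-8"
  shows "(2*B-3)*(p + s - p*(p-1)) \<le> 3*(B-1)^2 + 1 + s"
proof (cases "2*p + 1 \<le> B")
  case True
  have "(2*B-3)*(p + s - p*(p-1)) - s = (2*B-4)*s + (2*B-3)*(2*p - p*p)" by (simp add: algebra_simps)
  also have "\<dots> \<le> (2*B-4)*(p*p+p-2) + (2*B-3)*(2*p - p*p)"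
    using s2 B by (intro add_right_mono mult_left_mono) (auto simp: algebra_simps)
  also have "\<dots> = - p*p + (6*B-10)*p - 4*B + 8" by (simp add: algebra_simps)
  also have "\<dots> \<le> (6*B-10)*p - 4*B + 8" by simp
  also have "(6*B-10)*p \<le> (3*B-5)*(B-1)"
  proof -
    have "(6*B-10)*p = (3*B-5)*(2*p)" by (simp add: algebra_simps)
    also have "\<dots> \<le> (3*B-5)*(B-1)" using True B by (intro mult_left_mono) auto
    finally show ?thesis .
  qed
  then have "(6*B-10)*p - 4*B + 8 \<le> (3*B-5)*(B-1) - 4*B + 8" by simp
  also have "\<dots> \<le> 3*(B-1)^2 + 1" using B by (simp add: power2_eq_square algebra_simps)
  finally show ?thesis by simp
next
  case False
  have p8: "p \<le> 8"
  proof (rule ccontr)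
    assume "\<not> p \<le> 8"
    then have "p - 1 \<ge> 8" by simp
    then have "p*(p-1) \<ge> p*8" using p by (intro mult_left_mono) auto
    then show False using s1 s3 False by simp
  qed
  have B16: "B \<le> 16" using False p8 by simp
  have "2*p \<ge> B" using False by simp
  have pc: "p = 1 \<or> p = 2 \<or> p = 3 \<or> p = 4 \<or> p = 5 \<or> p = 6 \<or> p = 7 \<or> p = 8" using p p8 by presburger
  have Bc: "B = 3 \<or> B = 4 \<or> B = 5 \<or> B = 6 \<or> B = 7 \<or> B = 8 \<or> B = 9 \<or> B = 10 \<or> B = 11 \<or> B = 12 \<or> B = 13 \<or> B = 14 \<or> B = 15 \<or> B = 16" using B B16 by presburger
  from pc Bc s1 s2 s3 show ?thesis
    by (elim disjE) (simp_all add: power2_eq_square)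
qed



lemma tri_exists: "\<exists>p::nat. p \<ge> 1 \<and> p*(p-1) \<le> s \<and> s < p*(p+1)"
proof (induction s)
  case 0 show ?case by (intro exI[of _ 1]) simp
next
  case (Suc s)
  then obtain p where p: "p \<ge> 1" "p*(p-1) \<le> s" "s < p*(p+1)" by blast
  show ?case
  proof (cases "Suc s < p*(p+1)")
    case True then show ?thesis using p by (intro exI[of _ p]) auto
  next
    case False
    then have e: "Suc s = p*(p+1)" using p by simp
    have "(p+1)*(p+1-1) = p*(p+1)" by simp
    moreover have "p*(p+1) < (p+1)*(p+1+1)" by (simp add: algebra_simps)
    ultimately show ?thesis using e by (intro exI[of _ "p+1"]) simp
  qed
qed

lemma ident:
  fixes b P hi Mi qi ri :: int
  assumes "(2*b-3)*Mi = 4*(b-1)^2 - ri + (2*hi + P*(P-1))"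
  shows "(b-1-P)^2 + hi*(b-3)^2 + (Mi - P - 2*hi)*(b-2)^2 + (qi + 3 - hi - (Mi - P - 2*hi))*(b-1)^2 = qi*(b-1)^2 + ri"
  using assms by algebra



lemma decomp:
  fixes B q r :: nat
  assumes B: "B \<ge> 3" and r: "r < (B-1)^2" and q: "q \<ge> 2*B-3"
  shows "\<exists>ds. (\<forall>d\<in>set ds. d < B) \<and> ds \<noteq> [] \<and> last ds \<noteq> 0 \<and> length ds = q + 4
            \<and> sum_list (map (\<lambda>d. d^2) ds) = q*(B-1)^2 + r"
proof -
  define m where "m = 2*B-3"
  define D where "D = 4*(B-1)^2 - r"
  have m3: "m \<ge> 3" using B by (simp add: m_def)
  have modd: "odd m" using B by (simp add: m_def)
  obtain s0 where s0: "s0 < m" "m dvd D + s0"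
  proof (cases "D mod m = 0")
    case True then show ?thesis using that[of 0] m3 by auto
  next
    case False
    have "D + (m - D mod m) = (D div m) * m + m"
      using div_mult_mod_eq[of D m] mod_less_divisor[of m D] m3 by linarith
    then have "m dvd D + (m - D mod m)" by simp
    moreover have "m - D mod m < m" using False m3 by simp
    ultimately show ?thesis by (rule that[of "m - D mod m", rotated])
  qed
  define s where "s = (if even s0 then s0 else s0 + m)"
  have s: "even s" "s \<le> 4*B-8" "m dvd D + s"
  proof -
    show "even s" using modd by (simp add: s_def)
    show "m dvd D + s" using s0 by (simp add: s_def add.assoc[symmetric])
    have "s \<le> 2*m - 1" using s0 by (auto simp: s_def)
    moreover have "s \<noteq> 2*m - 1" using \<open>even s\<close> m3 by presburger
    ultimately have "s \<le> 2*m - 2" by linarith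
    then show "s \<le> 4*B-8" by (simp add: m_def)
  qed
  obtain p where p: "p \<ge> 1" "p*(p-1) \<le> s" "s < p*(p+1)" using tri_exists by blast
  have ep: "even (p*(p+1))" "even (p*(p-1))" by (cases "even p"; simp; cases p; simp)+
  have s2: "s + 2 \<le> p*(p+1)"
  proof -
    obtain N where N: "N = p*(p+1)" by blast
    have "even N" "s < N" using N ep p by auto
    then have "s + 2 \<le> N" using s(1) by presburger
    then show ?thesis using N by simp
  qed
  have pB: "p \<le> B - 1"
  proof (rule ccontr)
    assume "\<not> p \<le> B - 1"
    then have "p \<ge> B" by simp
    then have "B*(B-1) \<le> p*(p-1)" by (intro mult_mono) auto
    then have le: "B*(B-1) \<le> 4*B-8" using p s by simp
    show False
    proof (cases "B = 3")
      case True then show False using le by simp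
    next
      case False
      then have "4 \<le> B" using B by simp
      then have "4*(B-1) \<le> B*(B-1)" by (rule mult_le_mono1)
      moreover have "4*(B-1) = 4*B-4" by simp
      ultimately show False using le B by linarith
    qed
  qed
  define h where "h = (s - p*(p-1)) div 2"
  have h2: "2*h = s - p*(p-1)" using ep(2) s(1) by (simp add: h_def)
  define M where "M = (D + s) div m"
  have mM: "m*M = D + s" using s(3) by (simp add: M_def)
  have Dge: "D \<ge> 3*(B-1)^2 + 1" using r by (simp add: D_def)
  have key: "m*(p + 2*h) \<le> D + s"
  proof -
    have k: "(2*int B-3)*(int p + int s - int p*(int p-1)) \<le> 3*(int B-1)^2 + 1 + int s"
    proof (rule key_ineq)
      have "int (p*(p-1)) \<le> int s" using p by linarith
      then show "int p * (int p - 1) \<le> int s" using p by (simp add: of_nat_diff)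
      have "int (s + 2) \<le> int (p*(p+1))" using s2 by linarith
      then show "int s + 2 \<le> int p * (int p + 1)" by (simp add: algebra_simps)
    qed (use B p s in auto)
    have "int (m*(p + 2*h)) = (2*int B-3)*(int p + int s - int p*(int p-1))"
      using h2 p B by (simp add: m_def of_nat_diff)
    also have "\<dots> \<le> 3*(int B-1)^2 + 1 + int s" by (rule k)
    also have "\<dots> = int (3*(B-1)^2 + 1 + s)" using B by (simp add: of_nat_diff)
    also have "\<dots> \<le> int (D + s)"
    proof -
      have "3*(B-1)^2 + 1 + s \<le> D + s" using Dge by linarith
      then show ?thesis by (simp only: of_nat_le_iff)
    qed
    finally show ?thesis by (simp only: of_nat_le_iff)
  qed
  have "m*(p + 2*h) \<le> m*M" using key mM by simp
  then have W: "p + 2*h \<le> M" using m3 by simp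
  have M2: "M \<le> 2*B"
  proof -
    have "m*M \<le> 4*(B-1)^2 + (4*B-8)" using mM s by (simp add: D_def)
    also have "\<dots> < m*(2*B+1)"
    proof -
      have "int (4*(B-1)^2 + (4*B-8)) = 4*(int B-1)^2 + 4*int B - 8" using B by (simp add: of_nat_diff)
      also have "\<dots> < (2*int B - 3)*(2*int B+1)" by (simp add: power2_eq_square algebra_simps)
      also have "\<dots> = int m * (2*int B+1)" using B by (simp add: m_def of_nat_diff)
      also have "\<dots> = int (m*(2*B+1))" by (simp add: algebra_simps)
      finally show ?thesis by linarith
    qed
    finally show ?thesis by (metis mult_less_cancel1 less_Suc_eq_le Suc_eq_plus1 mult_2)
  qed
  define g where "g = M - p - 2*h"
  define a where "a = q + 3 - h - g"
  have hg: "h + g \<le> q + 2" using W M2 q p B by (simp add: g_def)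
  have a1: "a \<ge> 1" using hg by (simp add: a_def)
  define ds where "ds = (B-1-p) # replicate h (B-3) @ replicate g (B-2) @ replicate a (B-1)"
  have "\<forall>d\<in>set ds. d < B" using B by (auto simp: ds_def)
  moreover have "ds \<noteq> []" by (simp add: ds_def)
  moreover have "last ds \<noteq> 0" using a1 B by (simp add: ds_def)
  moreover have "length ds = q + 4" using hg by (simp add: ds_def a_def)
  moreover have "sum_list (map (\<lambda>d. d^2) ds) = q*(B-1)^2 + r"
  proof -
    have e1: "sum_list (map (\<lambda>d. d^2) ds) = (B-1-p)^2 + h*(B-3)^2 + g*(B-2)^2 + a*(B-1)^2"
      by (simp add: ds_def sum_list_replicate)
    have "int ((B-1-p)^2 + h*(B-3)^2 + g*(B-2)^2 + a*(B-1)^2)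
       = (int B-1-int p)^2 + int h*(int B-3)^2 + (int M - int p - 2*int h)*(int B-2)^2
         + (int q + 3 - int h - (int M - int p - 2*int h))*(int B-1)^2"
    proof -
      have ig: "int g = int M - int p - 2*int h" using W by (simp add: g_def)
      have ia: "int a = int q + 3 - int h - (int M - int p - 2*int h)" using hg ig by (simp add: a_def)
      have i1: "int (B-1-p) = int B - 1 - int p" using pB B by simp
      have i2: "int (B-3) = int B - 3" "int (B-2) = int B - 2" "int (B-1) = int B - 1" using B by auto
      show ?thesis by (simp only: of_nat_add of_nat_mult of_nat_power ig ia i1 i2)
    qed
    also have "\<dots> = int q*(int B-1)^2 + int r"
    proof (rule ident)
      have "int (m*M) = int (D + s)" using mM by simp
      moreover have "int s = 2*int h + int p*(int p-1)"
      proof -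
        have "s = 2*h + p*(p-1)" using h2 p by linarith
        then have "int s = 2*int h + int (p*(p-1))" by simp
        then show ?thesis using p by (simp add: of_nat_diff)
      qed
      ultimately show "(2*int B-3)*int M = 4*(int B-1)^2 - int r + (2*int h + int p*(int p-1))"
        using B r by (simp add: m_def D_def of_nat_diff)
    qed
    also have "\<dots> = int (q*(B-1)^2 + r)" using B by (simp add: of_nat_diff)
    finally show ?thesis using e1 by (simp only: of_nat_eq_iff)
  qed
  ultimately show ?thesis by blast
qed



theorem corollary2p4:
  fixes B \<eta> :: nat
  assumes "B \<ge> 2"
  shows "int (tcount B (\<eta> + 1))
           \<ge> \<lfloor>real (gamma B \<eta>) / real ((B - 1)^2)\<rfloor> - (2 * int B - 4)"
proof -
  have B: "B \<ge> 2" by (rule assms)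
  define x where "x = gamma B (Suc \<eta>)"
  define v0 where "v0 = gamma B \<eta>"
  define L where "L = numdigits B x"
  define t where "t = tcount B (\<eta> + 1)"
  have tdef: "t = card {i. i < L \<and> digit B x i = B - 1}"
    by (simp add: t_def tcount_def L_def x_def)
  have hb: "H B x \<le> (B-2)^2 * L + (2*B-3)*t"
    using H_bound[OF B, of x] by (simp add: tdef L_def)
  have gv: "v0 \<le> H B x" using gamma_H[OF B, of \<eta>] by (simp add: v0_def x_def)
  define q where "q = v0 div (B-1)^2"
  define r where "r = v0 mod (B-1)^2"
  have pos: "(B-1)^2 > 0" using B by simp
  have v0e: "v0 = q*(B-1)^2 + r" unfolding q_def r_def by (rule div_mult_mod_eq[symmetric])
  have rlt: "r < (B-1)^2" using pos by (simp add: r_def)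
  have fl: "\<lfloor>real (gamma B \<eta>) / real ((B - 1)^2)\<rfloor> = int q"
    unfolding v0_def[symmetric] q_def by (rule floor_divide_of_nat_eq)
  have main: "int q - (2 * int B - 4) \<le> int t"
  proof (cases "int q \<le> 2 * int B - 4")
    case True then show ?thesis by simp
  next
    case False
    show ?thesis
    proof (cases "B = 2")
      case True
      then have "v0 \<le> t" using hb gv by simp
      then show ?thesis using True v0e by simp
    next
      case False2: False
      then have B3: "B \<ge> 3" using B by simp
      have q3: "q \<ge> 2*B-3" using False by linarith
      obtain ds where ds: "\<forall>d\<in>set ds. d < B" "ds \<noteq> []" "last ds \<noteq> 0" "length ds = q + 4"
        "sum_list (map (\<lambda>d. d^2) ds) = q*(B-1)^2 + r"
        using decomp[OF B3 rlt q3] by blast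
      define x0 where "x0 = val B ds"
      have Hx0: "H B x0 = v0" using H_val[OF B ds(1-3)] ds(5) v0e by (simp add: x0_def)
      have "B ^ (length ds - 1) \<le> x0" using val_ge[of B ds] ds B by (simp add: x0_def)
      moreover have "B \<le> B ^ (length ds - 1)"
      proof -
        have "B^1 \<le> B^(q+3)" by (rule power_increasing) (use B in auto)
        then show ?thesis using ds(4) by (simp add: add.commute)
      qed
      ultimately have x01: "x0 \<noteq> 1" using B by linarith
      have gp: "v0 \<ge> 1" "happy B v0" "height B v0 = \<eta>" using gamma_prop[OF B, of \<eta>] by (auto simp: v0_def)
      have "x0 \<ge> 1 \<and> happy B x0 \<and> height B x0 = Suc \<eta>" by (rule height_step[OF B gp Hx0 x01])
      then have "x \<le> x0" unfolding x_def by (intro gamma_min) auto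
      moreover have "x0 < B ^ (q+4)" using val_lt[OF ds(1)] ds(4) by (simp add: x0_def)
      ultimately have "L \<le> q + 4" unfolding L_def by (intro numdigits_le) simp
      then have "(B-2)^2 * L \<le> (B-2)^2 * (q+4)" by simp
      then have nat_ineq: "q*(B-1)^2 + r \<le> (B-2)^2 * (q+4) + (2*B-3)*t" using hb gv v0e by linarith
      define b where "b = int B"
      have ib: "int (B-1) = b - 1" "int (B-2) = b - 2" "int (2*B-3) = 2*b - 3" using B3 by (auto simp: b_def)
      have ii: "int q*(b-1)^2 + int r \<le> (b-2)^2 * (int q+4) + (2*b-3)*int t"
      proof -
        have "int (q*(B-1)^2 + r) \<le> int ((B-2)^2 * (q+4) + (2*B-3)*t)" using nat_ineq by (simp only: of_nat_le_iff)
        then show ?thesis by (simp only: of_nat_add of_nat_mult of_nat_power ib of_nat_numeral)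
      qed
      have "(2*b-3)*(int q - 2*b + 3) < (2*b-3)*int t"
      proof -
        have "(2*b-3)*(int q - 2*b + 3) = int q*(b-1)^2 - (b-2)^2 * (int q+4) - (4*b - 7)"
          by (simp add: power2_eq_square algebra_simps)
        then show ?thesis using ii B3 b_def by linarith
      qed
      then have "int q - 2*b + 3 < int t" using B3 b_def by (simp add: mult_less_cancel_left_pos)
      then show ?thesis by (simp add: b_def)
    qed
  qed
  show ?thesis using main fl by (simp add: t_def)
qed

end
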